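(* Let $A\in\mathbb{R}^{N\times N}$ be symmetric with nonnegative entries, let $\overline{A}\in\mathbb{R}^{N\times N}$ be a symmetric matrix whose off-diagonal entries coincide with those of $A$ and with spectral radius $\rho(\overline{A})<1$, let $\sigma>0$ and $\alpha>1$, and set $C=\sigma^2(I-\overline{A})^{-\alpha}$. Let $\{1,\dots,N\}=\mathcal S\cup\mathcal S'$ be a partition into disjoint nonempty sets. Then: (1) $\lambda_{\min}(C)=\sigma^2\big(1-\lambda_{\min}(\overline{A})\big)^{-\alpha}$; (2) $\|C_{\mathcal S\mathcal S'}\|\le \sigma^2\,\alpha\,(1-\rho(\overline{A}))^{-\alpha-1}\,\|A_{\mathcal S\mathcal S'}\|$.
   Context: $(I-\overline{A})^{-\alpha}$ is defined by spectral calculus ($I-\overline{A}$ is symmetric positive definite since $\rho(\overline{A})<1$). $\|\cdot\|$ is the spectral norm, $\lambda_{\min}$ the smallest eigenvalue, $\rho$ the spectral radius. For a matrix $M$, $M_{\mathcal S\mathcal S'}$ is the submatrix with rows in $\mathcal S$ and columns in $\mathcal S'$ (note $\overline{A}_{\mathcal S\mathcal S'}=A_{\mathcal S\mathcal S'}$). In the paper's model, $\overline{A}=I-\kappa^2 D-L$ with $L=D-A$, $D=\mathrm{diag}(A\mathbf 1)$, $\kappa>0$. *)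

theory Defs
  imports "HOL-Analysis.Analysis"
begin

text \<open>Real eigenvalues of a real square matrix (for symmetric matrices these are all eigenvalues).\<close>
definition eigvals :: "real^'n^'n \<Rightarrow> real set" where
  "eigvals M = {l. \<exists>v. v \<noteq> 0 \<and> M *v v = l *\<^sub>R v}"

definition lambda_min :: "real^'n^'n \<Rightarrow> real" where
  "lambda_min M = Min (eigvals M)"

definition spec_radius :: "real^'n^'n \<Rightarrow> real" where
  "spec_radius M = Max (abs ` eigvals M)"

text \<open>Spectral calculus for a symmetric matrix: f(M) is the matrix acting as f(l) on
  every eigenvector of M with eigenvalue l.\<close>
definition mat_fun :: "(real \<Rightarrow> real) \<Rightarrow> real^'n^'n \<Rightarrow> real^'n^'n" where
  "mat_fun f M = (THE B. \<forall>v l. M *v v = l *\<^sub>R v \<longrightarrow> B *v v = f l *\<^sub>R v)"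

text \<open>Spectral norm of the submatrix M_{S S'}: operator norm of the zero-padded block
  (zero padding is an isometry, so this equals the spectral norm of the submatrix).\<close>
definition sub_norm :: "real^'n^'n \<Rightarrow> 'n set \<Rightarrow> 'n set \<Rightarrow> real" where
  "sub_norm M S S' = onorm (\<lambda>x. (\<chi> i. if i \<in> S then (M *v (\<chi> j. if j \<in> S' then x $ j else 0)) $ i else 0))"

end

theory Submission
  imports Defs
begin


lemma symm_inner:
  fixes M :: "real^'n^'n"
  assumes "transpose M = M"
  shows "(M *v x) \<bullet> y = x \<bullet> (M *v y)"
proof -
  have "M *v x = x v* M" by (metis vector_transpose_matrix assms)
  then show ?thesis by (simp add: dot_lmul_matrix)
qed

lemma quad_zero:
  fixes a b :: real
  assumes "\<And>t. t * a + t^2 * b \<le> 0"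
  shows "a = 0"
proof (rule ccontr)
  assume a: "a \<noteq> 0"
  define s where "s = 1 / (\<bar>b\<bar> + 1)"
  have s: "s > 0" "s * \<bar>b\<bar> < 1" unfolding s_def by (auto simp: field_simps)
  have "(s*a) * a + (s*a)^2 * b \<le> 0" by (rule assms)
  hence "a^2 * (s * (1 + s * b)) \<le> 0" by (simp add: power2_eq_square algebra_simps)
  moreover have "a^2 > 0" using a by simp
  moreover have "-(s*\<bar>b\<bar>) \<le> s*b"
    using mult_left_mono[OF _ less_imp_le[OF s(1)], of "-\<bar>b\<bar>" b] by simp
  hence "s * (1 + s * b) > 0" using s by (intro mult_pos_pos) auto
  ultimately show False by (metis mult_pos_pos not_le)
qed

lemma exists_eigvec:
  fixes M :: "real^'n^'n"
  assumes sym: "transpose M = M" and W: "subspace W" and inv: "\<And>w. w \<in> W \<Longrightarrow> M *v w \<in> W"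
    and ne: "w \<in> W" "w \<noteq> 0"
  shows "\<exists>x\<in>W. norm x = 1 \<and> (\<exists>l. M *v x = l *\<^sub>R x)"
proof -
  define K where "K = W \<inter> sphere 0 1"
  have cK: "compact K" unfolding K_def
    by (intro closed_Int_compact closed_subspace W compact_sphere)
  have "w /\<^sub>R norm w \<in> K" unfolding K_def using ne W
    by (auto simp: subspace_scale)
  hence neK: "K \<noteq> {}" by auto
  have cont: "continuous_on K (\<lambda>x. x \<bullet> (M *v x))"
    by (intro continuous_intros linear_continuous_on matrix_vector_mul_bounded_linear)
  obtain x0 where x0: "x0 \<in> K" and mx: "\<And>y. y \<in> K \<Longrightarrow> y \<bullet> (M *v y) \<le> x0 \<bullet> (M *v x0)"
    using continuous_attains_sup[OF cK neK cont] by blast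
  define l where "l = x0 \<bullet> (M *v x0)"
  have x0W: "x0 \<in> W" and nx0: "norm x0 = 1" using x0 by (auto simp: K_def)
  have x0x0: "x0 \<bullet> x0 = 1" using nx0 by (simp add: power2_norm_eq_inner[symmetric])
  have bound: "z \<bullet> (M *v z) \<le> l * (z \<bullet> z)" if z: "z \<in> W" for z
  proof (cases "z = 0")
    case True then show ?thesis by simp
  next
    case False
    define z' where "z' = z /\<^sub>R norm z"
    have "z' \<in> K" unfolding K_def z'_def using z False W by (auto simp: subspace_scale)
    hence "z' \<bullet> (M *v z') \<le> l" using mx l_def by blast
    moreover have "z' \<bullet> (M *v z') = (z \<bullet> (M *v z)) / (norm z)^2"
      unfolding z'_def by (simp add: matrix_vector_mult_scaleR power2_eq_square divide_simps)
    moreover have "z \<bullet> z = (norm z)^2" by (simp add: power2_norm_eq_inner)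
    moreover have "(norm z)^2 > 0" using False by simp
    ultimately show ?thesis by (simp add: divide_le_eq mult.commute)
  qed
  have stat: "y \<bullet> (M *v x0) = l * (x0 \<bullet> y)" if y: "y \<in> W" for y
  proof -
    have "t * (2 * (y \<bullet> (M *v x0) - l * (x0 \<bullet> y))) + t^2 * (y \<bullet> (M *v y) - l * (y \<bullet> y)) \<le> 0" for t
    proof -
      have "x0 + t *\<^sub>R y \<in> W" using x0W y W by (simp add: subspace_add subspace_scale)
      from bound[OF this]
      have "(x0 + t *\<^sub>R y) \<bullet> (M *v (x0 + t *\<^sub>R y)) \<le> l * ((x0 + t *\<^sub>R y) \<bullet> (x0 + t *\<^sub>R y))" .
      moreover have "x0 \<bullet> (M *v y) = y \<bullet> (M *v x0)"
        using symm_inner[OF sym, of y x0] by (simp add: inner_commute)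
      ultimately show ?thesis
        by (simp add: matrix_vector_right_distrib matrix_vector_mult_scaleR inner_add_left inner_add_right
            l_def x0x0 inner_commute[of y x0] power2_eq_square algebra_simps)
    qed
    from quad_zero[OF this] show ?thesis by simp
  qed
  define y where "y = M *v x0 - l *\<^sub>R x0"
  have "y \<in> W" unfolding y_def using inv[OF x0W] x0W W by (simp add: subspace_diff subspace_scale)
  from stat[OF this] have "y \<bullet> y = 0"
    unfolding y_def by (simp add: inner_diff_left inner_diff_right l_def inner_commute x0x0 algebra_simps)
  hence "M *v x0 = l *\<^sub>R x0" unfolding y_def by simp
  thus ?thesis using x0W nx0 by blast
qed


definition oe :: "real^'n^'n \<Rightarrow> (real^'n) set \<Rightarrow> bool" where
  "oe M B \<longleftrightarrow> finite B \<and> pairwise orthogonal B \<and> (\<forall>u\<in>B. norm u = 1) \<and> (\<forall>u\<in>B. \<exists>l. M *v u = l *\<^sub>R u)"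

lemma oe_indep: "oe M B \<Longrightarrow> independent B"
  unfolding oe_def by (intro pairwise_orthogonal_independent) force+

lemma oe_extend:
  fixes M :: "real^'n^'n"
  assumes sym: "transpose M = M" and B: "oe M B" and lt: "card B < DIM(real^'n)"
  shows "\<exists>B'. oe M B' \<and> card B' = Suc (card B)"
proof -
  define W where "W = {y. \<forall>x \<in> B. orthogonal x y}"
  have W: "subspace W" unfolding W_def by (rule subspace_orthogonal_to_vectors)
  have "dim B < DIM(real^'n)" using dim_eq_card_independent[OF oe_indep[OF B]] lt by simp
  then obtain w where w: "w \<noteq> 0" "\<And>y. y \<in> span B \<Longrightarrow> orthogonal w y"
    using orthogonal_to_subspace_exists by blast
  have wW: "w \<in> W" unfolding W_def using w(2) span_base by (force simp: orthogonal_commute)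
  have inv: "M *v y \<in> W" if "y \<in> W" for y
  proof -
    have "orthogonal u (M *v y)" if u: "u \<in> B" for u
    proof -
      obtain l where l: "M *v u = l *\<^sub>R u" using B u unfolding oe_def by blast
      have "u \<bullet> (M *v y) = (M *v u) \<bullet> y" using symm_inner[OF sym] by simp
      also have "\<dots> = l * (u \<bullet> y)" using l by simp
      also have "u \<bullet> y = 0" using \<open>y \<in> W\<close> u unfolding W_def orthogonal_def by blast
      finally show ?thesis by (simp add: orthogonal_def)
    qed
    thus ?thesis unfolding W_def by blast
  qed
  obtain x where x: "x \<in> W" "norm x = 1" "\<exists>l. M *v x = l *\<^sub>R x"
    using exists_eigvec[OF sym W inv wW w(1)] by blast
  have xB: "x \<notin> B"
  proof
    assume "x \<in> B"
    hence "orthogonal x x" using x(1) unfolding W_def by blast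
    thus False using x(2) by (simp add: orthogonal_self)
  qed
  have "oe M (insert x B)"
    using B x xB unfolding oe_def W_def
    by (auto simp: pairwise_insert orthogonal_commute)
  moreover have "card (insert x B) = Suc (card B)" using B xB by (simp add: oe_def)
  ultimately show ?thesis by blast
qed

lemma spectral:
  fixes M :: "real^'n^'n"
  assumes sym: "transpose M = M"
  shows "\<exists>B. oe M B \<and> span B = UNIV"
proof -
  have "k \<le> DIM(real^'n) \<Longrightarrow> \<exists>B. oe M B \<and> card B = k" for k
  proof (induction k)
    case 0
    have "oe M {}" by (simp add: oe_def)
    thus ?case by force
  next
    case (Suc k)
    then obtain B where "oe M B" "card B = k" by auto
    with oe_extend[OF sym this(1)] Suc.prems show ?case by auto
  qed
  then obtain B where B: "oe M B" "card B = DIM(real^'n)" by blast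
  have "dim B = DIM(real^'n)" using dim_eq_card_independent[OF oe_indep[OF B(1)]] B(2) by simp
  hence "span B = UNIV" using dim_eq_full by blast
  thus ?thesis using B by blast
qed


definition ob :: "(real^'n) set \<Rightarrow> bool" where
  "ob B \<longleftrightarrow> finite B \<and> pairwise orthogonal B \<and> (\<forall>u\<in>B. norm u = 1) \<and> span B = UNIV"

lemma mv_sum: "(A::real^'n^'m) *v (\<Sum>u\<in>B. f u) = (\<Sum>u\<in>B. A *v f u)"
  by (induction B rule: infinite_finite_induct) (auto simp: matrix_vector_right_distrib)

lemma ob_expand: "ob B \<Longrightarrow> (\<Sum>u\<in>B. (x \<bullet> u) *\<^sub>R u) = x"
  unfolding ob_def by (intro orthonormal_basis_expand) auto

lemma ob_inner: "ob B \<Longrightarrow> u \<in> B \<Longrightarrow> v \<in> B \<Longrightarrow> u \<bullet> v = (if u = v then 1 else 0)"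
  unfolding ob_def pairwise_def orthogonal_def
  by (auto simp: power2_norm_eq_inner[symmetric])

lemma ob_coeff:
  assumes "ob B" "u \<in> B"
  shows "(\<Sum>v\<in>B. c v *\<^sub>R v) \<bullet> u = c u"
proof -
  have "(\<Sum>v\<in>B. c v *\<^sub>R v) \<bullet> u = (\<Sum>v\<in>B. c v * (v \<bullet> u))" by (simp add: inner_sum_left)
  also have "\<dots> = (\<Sum>v\<in>B. if v = u then c u else 0)"
    by (rule sum.cong) (use assms ob_inner[OF assms(1)] in auto)
  also have "\<dots> = c u" using assms by (simp add: ob_def)
  finally show ?thesis .
qed

lemma ob_nonzero_coeff:
  assumes "ob B" "x \<noteq> 0"
  shows "\<exists>u\<in>B. x \<bullet> u \<noteq> 0"
proof (rule ccontr)
  assume "\<not> ?thesis"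
  hence "(\<Sum>u\<in>B. (x \<bullet> u) *\<^sub>R u) = 0" by simp
  thus False using ob_expand[OF assms(1)] assms(2) by simp
qed

lemma ob_nonempty: "ob (B :: (real^'n) set) \<Longrightarrow> B \<noteq> {}"
proof
  assume "ob B" "B = {}"
  hence "span B = {0}" by simp
  moreover have "(axis undefined 1 :: real^'n) \<noteq> 0" by (simp add: axis_eq_0_iff)
  ultimately show False using \<open>ob B\<close> unfolding ob_def by auto
qed

lemma eigvals_expand:
  fixes K :: "real^'n^'n"
  assumes B: "ob B" and K: "\<And>x. K *v x = (\<Sum>u\<in>B. (\<mu> u * (x \<bullet> u)) *\<^sub>R u)"
  shows "eigvals K = \<mu> ` B"
proof
  show "\<mu> ` B \<subseteq> eigvals K"
  proof
    fix l assume "l \<in> \<mu> ` B"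
    then obtain u where u: "u \<in> B" "l = \<mu> u" by blast
    have "K *v u = (\<Sum>v\<in>B. (if v = u then \<mu> u else 0) *\<^sub>R v)"
      unfolding K by (rule sum.cong) (use B u ob_inner[OF B] in \<open>auto simp: inner_commute\<close>)
    also have "\<dots> = (\<Sum>v\<in>B. if v = u then \<mu> u *\<^sub>R v else 0)"
      by (rule sum.cong) auto
    also have "\<dots> = \<mu> u *\<^sub>R u" using B u by (simp add: ob_def)
    finally have "K *v u = l *\<^sub>R u" using u by simp
    moreover have "u \<noteq> 0" using B u by (auto simp: ob_def)
    ultimately show "l \<in> eigvals K" unfolding eigvals_def by blast
  qed
next
  show "eigvals K \<subseteq> \<mu> ` B"
  proof
    fix l assume "l \<in> eigvals K"
    then obtain v where v: "v \<noteq> 0" "K *v v = l *\<^sub>R v" unfolding eigvals_def by blast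
    obtain u where u: "u \<in> B" "v \<bullet> u \<noteq> 0" using ob_nonzero_coeff[OF B v(1)] by blast
    have "(K *v v) \<bullet> u = \<mu> u * (v \<bullet> u)" unfolding K by (rule ob_coeff[OF B u(1)])
    hence "l * (v \<bullet> u) = \<mu> u * (v \<bullet> u)" using v(2) by simp
    hence "l = \<mu> u" using u(2) by simp
    thus "l \<in> \<mu> ` B" using u(1) by blast
  qed
qed

definition outer :: "real^'n \<Rightarrow> real^'n^'n" where
  "outer u = (\<chi> i j. u $ i * u $ j)"

lemma outer_sum_mv:
  "(\<Sum>u\<in>B. c u *\<^sub>R outer u) *v x = (\<Sum>u\<in>B. (c u * (x \<bullet> u)) *\<^sub>R u)"
proof -
  have "((\<Sum>u\<in>B. c u *\<^sub>R outer u) *v x) $ i = (\<Sum>u\<in>B. (c u * (x \<bullet> u)) *\<^sub>R u) $ i" for i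
  proof -
    have "((\<Sum>u\<in>B. c u *\<^sub>R outer u) *v x) $ i = (\<Sum>j\<in>UNIV. (\<Sum>u\<in>B. c u * (u $ i * u $ j)) * x $ j)"
      by (simp add: matrix_vector_mult_def sum_component outer_def)
    also have "\<dots> = (\<Sum>u\<in>B. (\<Sum>j\<in>UNIV. c u * (u $ i * u $ j) * x $ j))"
      by (simp add: sum_distrib_right sum.swap[of _ UNIV B])
    also have "\<dots> = (\<Sum>u\<in>B. c u * (\<Sum>j\<in>UNIV. x $ j * u $ j) * u $ i)"
      by (simp add: sum_distrib_left sum_distrib_right algebra_simps)
    also have "\<dots> = (\<Sum>u\<in>B. (c u * (x \<bullet> u)) *\<^sub>R u) $ i"
      by (simp add: sum_component inner_vec_def)
    finally show ?thesis .
  qed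
  thus ?thesis by (simp add: vec_eq_iff)
qed

lemma eig_coeff:
  fixes M :: "real^'n^'n"
  assumes sym: "transpose M = M" and "M *v x = l *\<^sub>R x" "M *v u = e *\<^sub>R u"
  shows "x \<bullet> u = 0 \<or> e = l"
proof -
  have "(M *v x) \<bullet> u = x \<bullet> (M *v u)" by (rule symm_inner[OF sym])
  hence "l * (x \<bullet> u) = e * (x \<bullet> u)" using assms by simp
  thus ?thesis by auto
qed

lemma mat_fun_expand:
  fixes M :: "real^'n^'n"
  assumes sym: "transpose M = M" and B: "ob B" and ev: "\<And>u. u \<in> B \<Longrightarrow> M *v u = ev u *\<^sub>R u"
  shows "mat_fun f M *v x = (\<Sum>u\<in>B. (f (ev u) * (x \<bullet> u)) *\<^sub>R u)"
proof -
  define F where "F = (\<Sum>u\<in>B. f (ev u) *\<^sub>R outer u)"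
  have F: "F *v x = (\<Sum>u\<in>B. (f (ev u) * (x \<bullet> u)) *\<^sub>R u)" for x
    unfolding F_def by (rule outer_sum_mv)
  have P: "\<forall>v l. M *v v = l *\<^sub>R v \<longrightarrow> F *v v = f l *\<^sub>R v"
  proof (intro allI impI)
    fix v l assume vl: "M *v v = l *\<^sub>R v"
    have "F *v v = (\<Sum>u\<in>B. (f l * (v \<bullet> u)) *\<^sub>R u)"
      unfolding F
    proof (rule sum.cong)
      fix u assume "u \<in> B"
      from eig_coeff[OF sym vl ev[OF this]]
      show "(f (ev u) * (v \<bullet> u)) *\<^sub>R u = (f l * (v \<bullet> u)) *\<^sub>R u" by auto
    qed simp
    also have "\<dots> = f l *\<^sub>R (\<Sum>u\<in>B. (v \<bullet> u) *\<^sub>R u)"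
      by (simp add: scaleR_sum_right)
    also have "\<dots> = f l *\<^sub>R v" using ob_expand[OF B, of v] by simp
    finally show "F *v v = f l *\<^sub>R v" .
  qed
  have U: "G = F" if G: "\<forall>v l. M *v v = l *\<^sub>R v \<longrightarrow> G *v v = f l *\<^sub>R v" for G
  proof -
    have "G *v y = F *v y" for y
    proof -
      have "G *v y = (\<Sum>u\<in>B. (y \<bullet> u) *\<^sub>R (G *v u))"
        using ob_expand[OF B, of y] by (metis (no_types, lifting) mv_sum matrix_vector_mult_scaleR sum.cong)
      also have "\<dots> = (\<Sum>u\<in>B. (f (ev u) * (y \<bullet> u)) *\<^sub>R u)"
      proof (rule sum.cong)
        fix u assume "u \<in> B"
        then have "G *v u = f (ev u) *\<^sub>R u" by (rule G[rule_format, OF ev])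
        thus "(y \<bullet> u) *\<^sub>R (G *v u) = (f (ev u) * (y \<bullet> u)) *\<^sub>R u" by (simp only: scaleR_scaleR mult.commute)
      qed simp
      finally show ?thesis using F by simp
    qed
    thus ?thesis by (simp add: matrix_eq)
  qed
  have "mat_fun f M = F" unfolding mat_fun_def
  proof (rule the_equality)
    show "\<forall>v l. M *v v = l *\<^sub>R v \<longrightarrow> F *v v = f l *\<^sub>R v" by (rule P)
  next
    fix G assume "\<forall>v l. M *v v = l *\<^sub>R v \<longrightarrow> G *v v = f l *\<^sub>R v"
    thus "G = F" by (rule U)
  qed
  thus ?thesis using F by simp
qed



lemma mv_expand:
  fixes K :: "real^'n^'n"
  assumes B: "ob B" and ev: "\<And>u. u \<in> B \<Longrightarrow> K *v u = \<mu> u *\<^sub>R u"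
  shows "K *v x = (\<Sum>u\<in>B. (\<mu> u * (x \<bullet> u)) *\<^sub>R u)"
proof -
  have "K *v x = K *v (\<Sum>u\<in>B. (x \<bullet> u) *\<^sub>R u)" using ob_expand[OF B, of x] by simp
  also have "\<dots> = (\<Sum>u\<in>B. (x \<bullet> u) *\<^sub>R (K *v u))" by (simp add: mv_sum matrix_vector_mult_scaleR)
  also have "\<dots> = (\<Sum>u\<in>B. (\<mu> u * (x \<bullet> u)) *\<^sub>R u)"
    by (rule sum.cong) (simp_all add: ev)
  finally show ?thesis .
qed

lemma parseval:
  assumes B: "ob B"
  shows "(norm (\<Sum>u\<in>B. c u *\<^sub>R u))^2 = (\<Sum>u\<in>B. (c u)^2)"
proof -
  have "pairwise (\<lambda>i j. orthogonal (c i *\<^sub>R i) (c j *\<^sub>R j)) B"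
    using B unfolding ob_def pairwise_def by (auto simp: orthogonal_clauses)
  hence "(norm (\<Sum>u\<in>B. c u *\<^sub>R u))^2 = (\<Sum>u\<in>B. (norm (c u *\<^sub>R u))^2)"
    using B by (intro norm_sum_Pythagorean) (auto simp: ob_def)
  also have "\<dots> = (\<Sum>u\<in>B. (c u)^2)"
    by (rule sum.cong) (use B in \<open>auto simp: ob_def power2_eq_square\<close>)
  finally show ?thesis .
qed

lemma op_bound:
  fixes K :: "real^'n^'n"
  assumes B: "ob B" and K: "\<And>x. K *v x = (\<Sum>u\<in>B. (\<mu> u * (x \<bullet> u)) *\<^sub>R u)"
    and r: "\<And>u. u \<in> B \<Longrightarrow> \<bar>\<mu> u\<bar> \<le> r" "0 \<le> r"
  shows "norm (K *v x) \<le> r * norm x"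
proof -
  have "(norm (K *v x))^2 = (\<Sum>u\<in>B. (\<mu> u * (x \<bullet> u))^2)" unfolding K by (rule parseval[OF B])
  also have "\<dots> \<le> (\<Sum>u\<in>B. r^2 * (x \<bullet> u)^2)"
  proof (rule sum_mono)
    fix u assume "u \<in> B"
    hence "\<bar>\<mu> u\<bar>^2 \<le> r^2" using r by (intro power_mono) auto
    hence "(\<mu> u)^2 \<le> r^2" by simp
    hence "(\<mu> u)^2 * (x \<bullet> u)^2 \<le> r^2 * (x \<bullet> u)^2" by (rule mult_right_mono) simp
    thus "(\<mu> u * (x \<bullet> u))^2 \<le> r^2 * (x \<bullet> u)^2" by (simp only: power_mult_distrib)
  qed
  also have "\<dots> = r^2 * (\<Sum>u\<in>B. (x \<bullet> u)^2)" by (simp only: sum_distrib_left)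
  also have "(\<Sum>u\<in>B. (x \<bullet> u)^2) = (norm x)^2"
    using parseval[OF B, of "\<lambda>u. x \<bullet> u"] ob_expand[OF B, of x] by simp
  also have "r^2 * (norm x)^2 = (r * norm x)^2" by (simp only: power_mult_distrib)
  finally have "(norm (K *v x))^2 \<le> (r * norm x)^2" .
  thus ?thesis by (rule power2_le_imp_le) (simp add: r(2))
qed

definition cc :: "real \<Rightarrow> nat \<Rightarrow> real" where
  "cc a k = pochhammer a k / fact k"

lemma cc_nonneg: "a > 0 \<Longrightarrow> cc a k \<ge> 0"
  unfolding cc_def by (simp add: pochhammer_pos less_imp_le)

lemma binom_series:
  fixes t :: real
  assumes "\<bar>t\<bar> < 1"
  shows "(\<lambda>k. cc a k * t^k) sums (1 - t) powr (-a)"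
proof -
  have "(\<lambda>n. ((-a) gchoose n) * (-t)^n) sums (1 + -t) powr (-a)"
    using gen_binomial_real[of "-t" "-a"] assms by simp
  moreover have "((-a) gchoose n) * (-t)^n = cc a n * t^n" for n
  proof -
    have "((-a) gchoose n) * (-t)^n = ((-1)^n * (-1)^n) * (pochhammer a n / fact n * t^n)"
      by (simp add: gbinomial_pochhammer power_minus[of t] algebra_simps)
    also have "(-1::real)^n * (-1)^n = 1" by (simp add: power_mult_distrib[symmetric])
    finally show ?thesis by (simp add: cc_def)
  qed
  ultimately show ?thesis by simp
qed

lemma cc_Suc: "cc a (Suc j) * real (Suc j) = a * cc (a + 1) j"
  unfolding cc_def by (simp add: pochhammer_rec fact_Suc field_simps del: of_nat_Suc)

lemma deriv_series:
  fixes r a :: real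
  assumes "0 \<le> r" "r < 1"
  shows "(\<lambda>k. cc a k * (real k * r^(k-1))) sums (a * (1 - r) powr (-a - 1))"
proof -
  have S0: "(\<lambda>j. a * (cc (a+1) j * r^j)) sums (a * (1 - r) powr (-(a+1)))"
    using binom_series[of r "a+1"] assms by (intro sums_mult) auto
  have T: "a * (cc (a+1) j * r^j) = cc a (Suc j) * (real (Suc j) * r^(Suc j - 1))" for j
  proof -
    have "cc a (Suc j) * (real (Suc j) * r^(Suc j - 1)) = (cc a (Suc j) * real (Suc j)) * r^j"
      by (simp only: diff_Suc_1 mult.assoc)
    also have "\<dots> = a * (cc (a+1) j * r^j)" by (simp only: cc_Suc mult.assoc)
    finally show ?thesis by (rule sym)
  qed
  have E: "-(a+1) = -a-1" by simp
  have "(\<lambda>j. cc a (Suc j) * (real (Suc j) * r^(Suc j - 1))) sums (a * (1 - r) powr (-a-1))"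
    using S0 unfolding T E .
  from sums_Suc[OF this] show ?thesis by simp
qed



definition proj :: "'n set \<Rightarrow> real^'n \<Rightarrow> real^'n" where
  "proj T x = (\<chi> i. if i \<in> T then x $ i else 0)"

definition Pm :: "'n set \<Rightarrow> real^'n^'n" where
  "Pm T = (\<chi> i j. if i = j \<and> j \<in> T then 1 else 0)"

lemma proj_mv: "proj T x = Pm T *v x"
proof -
  have "(Pm T *v x) $ i = (if i \<in> T then x $ i else 0)" for i
  proof -
    have "(Pm T *v x) $ i = (\<Sum>j\<in>UNIV. (if i = j \<and> j \<in> T then 1 else 0) * x $ j)"
      by (simp add: matrix_vector_mult_def Pm_def)
    also have "\<dots> = (\<Sum>j\<in>UNIV. if j = i then (if i \<in> T then x $ i else 0) else 0)"
      by (rule sum.cong) auto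
    also have "\<dots> = (if i \<in> T then x $ i else 0)" by (simp add: sum.delta)
    finally show ?thesis .
  qed
  thus ?thesis by (simp add: vec_eq_iff proj_def)
qed

lemma proj_bl: "bounded_linear (proj T)"
  unfolding proj_mv[abs_def] by (rule matrix_vector_mul_bounded_linear)

lemma proj_component: "proj T x $ i = (if i \<in> T then x $ i else 0)"
  by (simp add: proj_def)

lemma norm_proj: "norm (proj T x) \<le> norm x"
  unfolding norm_vec_def by (rule L2_set_mono) (auto simp: proj_component)

lemma proj_scaleR: "proj T (c *\<^sub>R x) = c *\<^sub>R proj T x"
  by (simp add: vec_eq_iff proj_component)

lemma proj_add: "proj T (x + y) = proj T x + proj T y"
  by (simp add: vec_eq_iff proj_component)

lemma proj_diff: "proj T (x - y) = proj T x - proj T y"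
  by (simp add: vec_eq_iff proj_component)

lemma proj_minus: "proj T (- x) = - proj T x"
  by (simp add: vec_eq_iff proj_component)

lemma proj_proj: "proj T (proj T x) = proj T x"
  by (simp add: vec_eq_iff proj_component)

lemma proj_inner: "proj T x \<bullet> y = x \<bullet> proj T y"
  unfolding inner_vec_def by (intro sum.cong) (auto simp: proj_component)

lemma sub_norm_proj: "sub_norm M S S' = onorm (\<lambda>x. proj S (M *v proj S' x))"
  unfolding sub_norm_def proj_def by simp

context
  fixes S S' :: "'n::finite set"
  assumes SS: "S \<union> S' = UNIV" "S \<inter> S' = {}"
begin

lemma projs_add: "proj S x + proj S' x = x"
  using SS by (auto simp: vec_eq_iff proj_component)

lemma projs_orth: "proj S x \<bullet> proj S' y = 0"
  unfolding inner_vec_def using SS by (intro sum.neutral) (auto simp: proj_component)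

lemma projs_pyth: "(norm (proj S x))^2 + (norm (proj S' x))^2 = (norm x)^2"
proof -
  have "orthogonal (proj S x) (proj S' x)" using projs_orth by (simp add: orthogonal_def)
  from norm_add_Pythagorean[OF this] show ?thesis using projs_add by simp
qed

lemma projS_S': "proj S (proj S' x) = 0"
  using SS by (auto simp: vec_eq_iff proj_component)

lemma projS'_S: "proj S' (proj S x) = 0"
  using SS by (auto simp: vec_eq_iff proj_component)

definition U :: "real^'n \<Rightarrow> real^'n" where
  "U x = proj S x - proj S' x"

lemma UU: "U (U x) = x"
  unfolding U_def using projs_add[of x]
  by (simp add: proj_diff proj_proj projS_S' projS'_S algebra_simps)

lemma norm_U: "norm (U x) = norm x"
proof -
  have "\<bar>U x $ i\<bar> = \<bar>x $ i\<bar>" for i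
    using SS by (auto simp: U_def proj_component)
  thus ?thesis unfolding norm_vec_def by simp
qed

lemma proj_U: "proj S (U x) = proj S x"
  unfolding U_def by (simp add: proj_diff proj_proj projS_S')

lemma U_proj: "U (proj S' x) = - proj S' x"
  unfolding U_def by (simp add: proj_proj projS_S')

lemma U_minus: "U (- w) = - U w"
  unfolding U_def by (simp add: proj_minus)

lemma U_add: "U (x + y) = U x + U y" and U_diff: "U (x - y) = U x - U y"
  and U_scaleR: "U (c *\<^sub>R x) = c *\<^sub>R U x"
  unfolding U_def by (simp_all add: proj_add proj_diff proj_scaleR algebra_simps)

end


lemma mv_minus: "(A::real^'n::finite^'m) *v (- x) = - (A *v x)"
  by (simp add: vec_eq_iff matrix_vector_mult_def sum_negf)

context
  fixes Ab :: "real^'n::finite^'n" and S S' :: "'n set" and B and ev :: "real^'n \<Rightarrow> real" and \<rho> :: real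
  assumes SS: "S \<union> S' = UNIV" "S \<inter> S' = {}" and sym: "transpose Ab = Ab"
    and B: "ob B" and ev: "\<And>u. u \<in> B \<Longrightarrow> Ab *v u = ev u *\<^sub>R u"
    and rho: "\<And>u. u \<in> B \<Longrightarrow> \<bar>ev u\<bar> \<le> \<rho>" "0 \<le> \<rho>"
begin

lemma a_norm: "norm (Ab *v x) \<le> \<rho> * norm x"
  by (rule op_bound[OF B mv_expand[OF B ev] rho])

definition tt :: "real^'n \<Rightarrow> real^'n" where
  "tt x = U S S' (Ab *v U S S' x)"

lemma t_norm: "norm (tt x) \<le> \<rho> * norm x"
  unfolding tt_def using a_norm[of "U S S' x"] by (simp add: norm_U[OF SS])

lemma tpow: "(tt ^^ k) x = U S S' (((*v) Ab ^^ k) (U S S' x))"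
  by (induction k) (simp_all add: tt_def UU[OF SS])

lemma apow_norm: "norm (((*v) Ab ^^ k) x) \<le> \<rho>^k * norm x"
proof (induction k)
  case 0 then show ?case by simp
next
  case (Suc k)
  have "norm (((*v) Ab ^^ Suc k) x) \<le> \<rho> * norm (((*v) Ab ^^ k) x)" using a_norm by simp
  also have "\<dots> \<le> \<rho> * (\<rho>^k * norm x)" using Suc rho(2) by (rule mult_left_mono)
  finally show ?case by (simp add: mult.assoc)
qed

lemma tpow_norm: "norm ((tt ^^ k) x) \<le> \<rho>^k * norm x"
  unfolding tpow norm_U[OF SS] using apow_norm[of k "U S S' x"] by (simp add: norm_U[OF SS])

lemma apow_minus: "((*v) Ab ^^ k) (- x) = - ((*v) Ab ^^ k) x"
  by (induction k) (simp_all add: mv_minus)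

definition X :: "real^'n \<Rightarrow> real^'n" where "X x = proj S (Ab *v proj S' x)"
definition X' :: "real^'n \<Rightarrow> real^'n" where "X' x = proj S' (Ab *v proj S x)"

lemma X_bl: "bounded_linear X"
  unfolding X_def[abs_def]
  by (intro bounded_linear_compose[OF proj_bl] bounded_linear_compose[OF matrix_vector_mul_bounded_linear] proj_bl)

lemma X_norm: "norm (X x) \<le> onorm X * norm x"
  by (rule onorm[OF X_bl])

lemma e_nonneg: "0 \<le> onorm X"
  by (rule onorm_pos_le[OF X_bl])

lemma X_proj: "X x = X (proj S' x)"
  unfolding X_def by (simp add: proj_proj)

lemma X'_proj: "X' x = X' (proj S x)"
  unfolding X'_def by (simp add: proj_proj)

lemma X'_adj: "X' z \<bullet> w = z \<bullet> X w"
proof -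
  have "X' z \<bullet> w = (Ab *v proj S z) \<bullet> proj S' w" unfolding X'_def by (rule proj_inner)
  also have "\<dots> = proj S z \<bullet> (Ab *v proj S' w)" by (rule symm_inner[OF sym])
  also have "\<dots> = z \<bullet> X w" unfolding X_def by (rule proj_inner)
  finally show ?thesis .
qed

lemma X'_norm: "norm (X' z) \<le> onorm X * norm z"
proof -
  define v where "v = X' z"
  have "(norm v)^2 = z \<bullet> X v" unfolding v_def by (simp add: X'_adj power2_norm_eq_inner)
  also have "\<dots> \<le> norm z * norm (X v)" by (rule norm_cauchy_schwarz)
  also have "\<dots> \<le> norm z * (onorm X * norm v)" by (rule mult_left_mono[OF X_norm norm_ge_zero])
  finally have *: "norm v * norm v \<le> norm v * (onorm X * norm z)" by (simp add: power2_eq_square algebra_simps)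
  show ?thesis
  proof (cases "norm v = 0")
    case True thus ?thesis using e_nonneg v_def by simp
  next
    case False
    hence "norm v > 0" by simp
    with * show ?thesis unfolding v_def by (simp add: mult_le_cancel_left_pos)
  qed
qed

lemma U_comp: "U S S' w $ i = (if i \<in> S then w $ i else - w $ i)"
  using SS by (auto simp: U_def proj_component)

lemma diff_eq: "Ab *v x - tt x = 2 *\<^sub>R (X x + X' x)"
proof -
  have xy1: "x - U S S' x = 2 *\<^sub>R proj S' x" and xy2: "x + U S S' x = 2 *\<^sub>R proj S x"
    using SS by (auto simp: vec_eq_iff U_comp proj_component)
  have "(Ab *v x - tt x) $ i = (2 *\<^sub>R (X x + X' x)) $ i" for i
  proof (cases "i \<in> S")
    case True
    have "(Ab *v x - tt x) $ i = (Ab *v x) $ i - (Ab *v U S S' x) $ i"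
      unfolding tt_def using True by (simp add: U_comp)
    also have "\<dots> = (Ab *v (x - U S S' x)) $ i" by (simp add: matrix_vector_mult_diff_distrib)
    also have "\<dots> = (2 *\<^sub>R (X x + X' x)) $ i"
      unfolding xy1 X_def X'_def using True SS
      by (auto simp: proj_component matrix_vector_mult_scaleR)
    finally show ?thesis .
  next
    case False
    have "(Ab *v x - tt x) $ i = (Ab *v x) $ i + (Ab *v U S S' x) $ i"
      unfolding tt_def using False by (simp add: U_comp)
    also have "\<dots> = (Ab *v (x + U S S' x)) $ i" by (simp add: matrix_vector_right_distrib)
    also have "\<dots> = (2 *\<^sub>R (X x + X' x)) $ i"
      unfolding xy2 X_def X'_def using False SS
      by (auto simp: proj_component matrix_vector_mult_scaleR)
    finally show ?thesis .
  qed
  thus ?thesis by (simp add: vec_eq_iff)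
qed

lemma diff_norm: "norm (Ab *v x - tt x) \<le> 2 * onorm X * norm x"
proof -
  have o: "orthogonal (X x) (X' x)" unfolding X_def X'_def orthogonal_def by (rule projs_orth[OF SS])
  have "(norm (X x + X' x))^2 = (norm (X x))^2 + (norm (X' x))^2" by (rule norm_add_Pythagorean[OF o])
  also have "\<dots> \<le> (onorm X * norm (proj S' x))^2 + (onorm X * norm (proj S x))^2"
  proof (rule add_mono)
    show "(norm (X x))^2 \<le> (onorm X * norm (proj S' x))^2"
      using X_norm[of "proj S' x"] X_proj[of x] by (intro power_mono) auto
    show "(norm (X' x))^2 \<le> (onorm X * norm (proj S x))^2"
      using X'_norm[of "proj S x"] X'_proj[of x] by (intro power_mono) auto
  qed
  also have "\<dots> = (onorm X)^2 * ((norm (proj S x))^2 + (norm (proj S' x))^2)"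
    by (simp add: power_mult_distrib algebra_simps)
  also have "\<dots> = (onorm X * norm x)^2" by (simp add: projs_pyth[OF SS] power_mult_distrib)
  finally have "norm (X x + X' x) \<le> onorm X * norm x"
    by (rule power2_le_imp_le) (simp add: e_nonneg)
  thus ?thesis unfolding diff_eq by simp
qed

lemma telescope: "norm (((*v) Ab ^^ k) x - (tt ^^ k) x) \<le> real k * \<rho>^(k-1) * (2 * onorm X) * norm x"
proof (induction k)
  case 0 then show ?case by simp
next
  case (Suc k)
  define A where "A = ((*v) Ab ^^ k) x"
  define T where "T = (tt ^^ k) x"
  have "((*v) Ab ^^ Suc k) x - (tt ^^ Suc k) x = Ab *v (A - T) + (Ab *v T - tt T)"
    by (simp add: A_def T_def matrix_vector_mult_diff_distrib)
  hence "norm (((*v) Ab ^^ Suc k) x - (tt ^^ Suc k) x) \<le> norm (Ab *v (A - T)) + norm (Ab *v T - tt T)"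
    by (simp add: norm_triangle_ineq)
  also have "\<dots> \<le> \<rho> * (real k * \<rho>^(k-1) * (2 * onorm X) * norm x) + 2 * onorm X * (\<rho>^k * norm x)"
  proof (rule add_mono)
    show "norm (Ab *v (A - T)) \<le> \<rho> * (real k * \<rho>^(k-1) * (2 * onorm X) * norm x)"
      using a_norm[of "A - T"] mult_left_mono[OF Suc.IH rho(2)] unfolding A_def T_def by linarith
    show "norm (Ab *v T - tt T) \<le> 2 * onorm X * (\<rho>^k * norm x)"
      using diff_norm[of T] mult_left_mono[OF tpow_norm[of k x], of "2 * onorm X"] e_nonneg
      unfolding T_def by simp
  qed
  also have "\<dots> = real (Suc k) * \<rho>^(Suc k - 1) * (2 * onorm X) * norm x"
  proof (cases k)
    case 0 thus ?thesis by simp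
  next
    case (Suc m)
    thus ?thesis by (simp add: algebra_simps)
  qed
  finally show ?case .
qed

lemma block: "norm (proj S (((*v) Ab ^^ k) (proj S' x))) \<le> real k * \<rho>^(k-1) * onorm X * norm x"
proof -
  define y where "y = proj S' x"
  have "(tt ^^ k) y = - U S S' (((*v) Ab ^^ k) y)"
    unfolding tpow y_def U_proj[OF SS] apow_minus by (simp add: U_minus[OF SS])
  hence "proj S (((*v) Ab ^^ k) y - (tt ^^ k) y) = proj S (((*v) Ab ^^ k) y) + proj S (((*v) Ab ^^ k) y)"
    by (simp only: proj_diff proj_minus proj_U[OF SS] diff_minus_eq_add proj_add)
  also have "\<dots> = 2 *\<^sub>R proj S (((*v) Ab ^^ k) y)" by (rule scaleR_2[symmetric])
  finally have eq2: "proj S (((*v) Ab ^^ k) y - (tt ^^ k) y) = 2 *\<^sub>R proj S (((*v) Ab ^^ k) y)" .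
  have "2 * norm (proj S (((*v) Ab ^^ k) y)) = norm (proj S (((*v) Ab ^^ k) y - (tt ^^ k) y))"
    by (simp only: eq2 norm_scaleR abs_numeral)
  also have "\<dots> \<le> norm (((*v) Ab ^^ k) y - (tt ^^ k) y)" by (rule norm_proj)
  also have "\<dots> \<le> real k * \<rho>^(k-1) * (2 * onorm X) * norm y" by (rule telescope)
  also have "\<dots> \<le> real k * \<rho>^(k-1) * (2 * onorm X) * norm x"
    unfolding y_def using e_nonneg rho(2) by (intro mult_left_mono norm_proj) auto
  finally show ?thesis unfolding y_def by simp
qed


lemma apow_expand: "((*v) Ab ^^ k) y = (\<Sum>u\<in>B. (ev u ^ k * (y \<bullet> u)) *\<^sub>R u)"
proof (induction k)
  case 0 then show ?case using ob_expand[OF B, of y] by simp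
next
  case (Suc k)
  have "((*v) Ab ^^ Suc k) y = Ab *v (\<Sum>u\<in>B. (ev u ^ k * (y \<bullet> u)) *\<^sub>R u)" using Suc by simp
  also have "\<dots> = (\<Sum>u\<in>B. (ev u ^ k * (y \<bullet> u)) *\<^sub>R (Ab *v u))"
    by (simp add: mv_sum matrix_vector_mult_scaleR)
  also have "\<dots> = (\<Sum>u\<in>B. (ev u ^ Suc k * (y \<bullet> u)) *\<^sub>R u)"
    by (rule sum.cong) (simp_all add: ev)
  finally show ?case .
qed

lemma series_bound:
  fixes G :: "real^'n^'n" and \<alpha> :: real
  assumes r1: "\<rho> < 1" and a0: "\<alpha> > 0"
    and G: "\<And>y. G *v y = (\<Sum>u\<in>B. ((1 - ev u) powr (-\<alpha>) * (y \<bullet> u)) *\<^sub>R u)"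
  shows "norm (proj S (G *v proj S' x)) \<le> \<alpha> * (1 - \<rho>) powr (-\<alpha> - 1) * onorm X * norm x"
proof -
  define y where "y = proj S' x"
  have s1: "(\<lambda>k. (cc \<alpha> k * ev u ^ k * (y \<bullet> u)) *\<^sub>R u) sums ((((1 - ev u) powr (-\<alpha>)) * (y \<bullet> u)) *\<^sub>R u)"
    if u: "u \<in> B" for u
  proof -
    have "\<bar>ev u\<bar> < 1" using rho(1)[OF u] r1 by linarith
    from sums_mult2[OF binom_series[OF this, of \<alpha>], of "y \<bullet> u"]
    have "(\<lambda>k. cc \<alpha> k * ev u ^ k * (y \<bullet> u)) sums ((1 - ev u) powr (-\<alpha>) * (y \<bullet> u))" .
    from sums_scaleR_left[OF this] show ?thesis .
  qed
  have "(\<lambda>k. \<Sum>u\<in>B. (cc \<alpha> k * ev u ^ k * (y \<bullet> u)) *\<^sub>R u) sums (G *v y)"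
    unfolding G by (rule sums_sum[OF s1])
  moreover have "(\<Sum>u\<in>B. (cc \<alpha> k * ev u ^ k * (y \<bullet> u)) *\<^sub>R u) = cc \<alpha> k *\<^sub>R ((*v) Ab ^^ k) y" for k
    unfolding apow_expand by (simp add: scaleR_sum_right mult.assoc)
  ultimately have "(\<lambda>k. cc \<alpha> k *\<^sub>R ((*v) Ab ^^ k) y) sums (G *v y)" by simp
  from bounded_linear.sums[OF proj_bl this, of S]
  have s2: "(\<lambda>k. proj S (cc \<alpha> k *\<^sub>R ((*v) Ab ^^ k) y)) sums proj S (G *v y)" .
  have s3: "(\<lambda>k. cc \<alpha> k * (real k * \<rho>^(k-1)) * (onorm X * norm x)) sums
      (\<alpha> * (1 - \<rho>) powr (-\<alpha> - 1) * (onorm X * norm x))"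
    by (rule sums_mult2[OF deriv_series[OF rho(2) r1]])
  have "norm (proj S (G *v y)) \<le> \<alpha> * (1 - \<rho>) powr (-\<alpha> - 1) * (onorm X * norm x)"
  proof (rule norm_sums_le[OF s2 s3])
    fix k
    have "norm (proj S (cc \<alpha> k *\<^sub>R ((*v) Ab ^^ k) y)) = cc \<alpha> k * norm (proj S (((*v) Ab ^^ k) y))"
      using cc_nonneg[OF a0, of k] by (simp add: proj_scaleR)
    also have "\<dots> \<le> cc \<alpha> k * (real k * \<rho>^(k-1) * onorm X * norm x)"
      unfolding y_def by (rule mult_left_mono[OF block cc_nonneg[OF a0]])
    finally show "norm (proj S (cc \<alpha> k *\<^sub>R ((*v) Ab ^^ k) y)) \<le> cc \<alpha> k * (real k * \<rho>^(k-1)) * (onorm X * norm x)"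
      by (simp add: mult.assoc)
  qed
  thus ?thesis unfolding y_def by (simp add: mult.assoc)
qed

end


lemma mv_diff_left: "((A::real^'n::finite^'m) - Bm) *v x = A *v x - Bm *v x"
  by (simp add: vec_eq_iff matrix_vector_mult_def sum_subtractf left_diff_distrib)

lemma transpose_diff': "transpose ((A::real^'n::finite^'n) - Bm) = transpose A - transpose Bm"
  by (simp add: vec_eq_iff transpose_def)

theorem lemma2:
  fixes A Abar :: "real^'n^'n" and \<sigma> \<alpha> :: real and S S' :: "'n set"
  assumes "transpose A = A" and "\<forall>i j. 0 \<le> A $ i $ j"
    and "transpose Abar = Abar" and "\<forall>i j. i \<noteq> j \<longrightarrow> Abar $ i $ j = A $ i $ j"
    and "spec_radius Abar < 1"
    and "\<sigma> > 0" and "\<alpha> > 1"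
    and "S \<union> S' = UNIV" and "S \<inter> S' = {}" and "S \<noteq> {}" and "S' \<noteq> {}"
  shows "lambda_min (\<sigma>\<^sup>2 *\<^sub>R mat_fun (\<lambda>x. x powr (-\<alpha>)) (mat 1 - Abar))
           = \<sigma>\<^sup>2 * (1 - lambda_min Abar) powr (-\<alpha>)
       \<and> sub_norm (\<sigma>\<^sup>2 *\<^sub>R mat_fun (\<lambda>x. x powr (-\<alpha>)) (mat 1 - Abar)) S S'
           \<le> \<sigma>\<^sup>2 * \<alpha> * (1 - spec_radius Abar) powr (-\<alpha> - 1) * sub_norm A S S'"
proof -
  have SS: "S \<union> S' = UNIV" "S \<inter> S' = {}" using assms(8,9) by auto
  have sym: "transpose Abar = Abar" by (rule assms(3))
  from spectral[OF sym] obtain B where oeB: "oe Abar B" and spanB: "span B = UNIV" by blast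
  have B: "ob B" using oeB spanB unfolding oe_def ob_def by auto
  from oeB have "\<forall>u\<in>B. \<exists>l. Abar *v u = l *\<^sub>R u" by (simp add: oe_def)
  then obtain ev where ev: "\<And>u. u \<in> B \<Longrightarrow> Abar *v u = ev u *\<^sub>R u" by metis
  have eigA: "eigvals Abar = ev ` B" by (rule eigvals_expand[OF B mv_expand[OF B ev]])
  have finB: "finite B" using B by (simp add: ob_def)
  have neB: "B \<noteq> {}" by (rule ob_nonempty[OF B])
  define \<rho> where "\<rho> = spec_radius Abar"
  have rho_eq: "\<rho> = Max ((\<lambda>u. \<bar>ev u\<bar>) ` B)" unfolding \<rho>_def spec_radius_def eigA image_image ..
  have rho1: "\<bar>ev u\<bar> \<le> \<rho>" if "u \<in> B" for u
    unfolding rho_eq using finB that by (intro Max_ge) auto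
  have rho0: "0 \<le> \<rho>" using neB rho1 by (meson abs_ge_zero all_not_in_conv order_trans)
  have r1: "\<rho> < 1" using assms(5) by (simp add: \<rho>_def)
  define M where "M = mat 1 - Abar"
  have symM: "transpose M = M" unfolding M_def transpose_diff' sym by simp
  have evM: "M *v u = (1 - ev u) *\<^sub>R u" if "u \<in> B" for u
    unfolding M_def mv_diff_left using ev[OF that] by (simp add: algebra_simps)
  define g where "g = (\<lambda>x::real. x powr (-\<alpha>))"
  define G where "G = mat_fun g M"
  have Gexp: "G *v y = (\<Sum>u\<in>B. ((1 - ev u) powr (-\<alpha>) * (y \<bullet> u)) *\<^sub>R u)" for y
    unfolding G_def using mat_fun_expand[OF symM B evM] by (simp add: g_def)
  define C where "C = \<sigma>\<^sup>2 *\<^sub>R G"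
  have Cv: "C *v y = \<sigma>\<^sup>2 *\<^sub>R (G *v y)" for y
    unfolding C_def by (simp add: scaleR_matrix_vector_assoc)
  have Cexp: "C *v y = (\<Sum>u\<in>B. (\<sigma>\<^sup>2 * (1 - ev u) powr (-\<alpha>) * (y \<bullet> u)) *\<^sub>R u)" for y
    unfolding Cv Gexp by (simp add: scaleR_sum_right mult.assoc)
  define h where "h u = \<sigma>\<^sup>2 * (1 - ev u) powr (-\<alpha>)" for u
  have eigC: "eigvals C = h ` B" unfolding h_def by (rule eigvals_expand[OF B Cexp])
  \<comment> \<open>Part 1\<close>
  have "Min (ev ` B) \<in> ev ` B" using finB neB by (intro Min_in) auto
  then obtain u0 where u0: "u0 \<in> B" "ev u0 = Min (ev ` B)" by (metis imageE)
  have lmA: "lambda_min Abar = ev u0" unfolding lambda_min_def eigA u0(2) ..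
  have "Min (h ` B) = h u0"
  proof (rule Min_eqI)
    show "finite (h ` B)" using finB by simp
    show "h u0 \<in> h ` B" using u0 by simp
    fix y assume "y \<in> h ` B"
    then obtain u where u: "u \<in> B" "y = h u" by blast
    have "ev u0 \<le> ev u" unfolding u0(2) using finB u by (intro Min_le) auto
    moreover have "0 < 1 - ev u" using rho1[OF u(1)] r1 by linarith
    ultimately have "(1 - ev u0) powr (-\<alpha>) \<le> (1 - ev u) powr (-\<alpha>)"
      using assms(7) by (intro powr_mono2') auto
    thus "h u0 \<le> y" unfolding u h_def by (intro mult_left_mono) auto
  qed
  hence part1: "lambda_min C = \<sigma>\<^sup>2 * (1 - lambda_min Abar) powr (-\<alpha>)"
    unfolding lambda_min_def eigC by (simp add: h_def lmA[unfolded lambda_min_def])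
  \<comment> \<open>Part 2\<close>
  have blG: "bounded_linear (\<lambda>x. proj S (G *v proj S' x))"
    by (intro bounded_linear_compose[OF proj_bl] bounded_linear_compose[OF matrix_vector_mul_bounded_linear] proj_bl)
  have subC: "sub_norm C S S' = \<sigma>\<^sup>2 * sub_norm G S S'"
  proof -
    have "sub_norm C S S' = onorm (\<lambda>x. \<sigma>\<^sup>2 *\<^sub>R proj S (G *v proj S' x))"
      unfolding sub_norm_proj Cv proj_scaleR ..
    also have "\<dots> = \<bar>\<sigma>\<^sup>2\<bar> * onorm (\<lambda>x. proj S (G *v proj S' x))" by (rule onorm_scaleR[OF blG])
    finally show ?thesis by (simp add: sub_norm_proj)
  qed
  have AX: "(\<lambda>x. proj S (A *v proj S' x)) = X Abar S S'"
  proof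
    fix x
    have "proj S (A *v proj S' x) $ i = proj S (Abar *v proj S' x) $ i" for i
    proof (cases "i \<in> S")
      case True
      have "(A *v proj S' x) $ i = (Abar *v proj S' x) $ i"
        unfolding matrix_vector_mult_def
      proof (simp, rule sum.cong)
        fix j
        show "A $ i $ j * proj S' x $ j = Abar $ i $ j * proj S' x $ j"
        proof (cases "j \<in> S'")
          case True
          hence "i \<noteq> j" using \<open>i \<in> S\<close> SS by auto
          thus ?thesis using assms(4) by simp
        qed (simp add: proj_component)
      qed simp
      thus ?thesis by (simp add: proj_component)
    qed (simp add: proj_component)
    thus "proj S (A *v proj S' x) = X Abar S S' x" by (simp add: vec_eq_iff X_def[OF SS sym B ev rho1 rho0])
  qed
  have subA: "sub_norm A S S' = onorm (X Abar S S')" unfolding sub_norm_proj AX ..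
  have bnd: "norm (proj S (G *v proj S' x)) \<le> \<alpha> * (1 - \<rho>) powr (-\<alpha> - 1) * onorm (X Abar S S') * norm x" for x
  proof -
    have a0: "0 < \<alpha>" using assms(7) by linarith
    show ?thesis by (rule series_bound[OF SS sym B ev rho1 rho0 r1 a0 Gexp])
  qed
  have "sub_norm G S S' \<le> \<alpha> * (1 - \<rho>) powr (-\<alpha> - 1) * onorm (X Abar S S')"
    unfolding sub_norm_proj by (rule onorm_le[OF bnd])
  hence part2: "sub_norm C S S' \<le> \<sigma>\<^sup>2 * \<alpha> * (1 - \<rho>) powr (-\<alpha> - 1) * sub_norm A S S'"
    unfolding subC subA by (simp add: mult.assoc mult_left_mono)
  show ?thesis using part1 part2 unfolding C_def G_def M_def g_def \<rho>_def by simp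
qed

end
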